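(* Let $C$ and $C'$ be two cycle graphs with the same degree sequence. If $e\in E(C)\cap E(C')$, then there exists a u-switch sequence transforming $C$ into $C'$: 2-switches $\tau_1,\dots,\tau_k$ ($k\ge0$) such that, with $C_0=C$ and $C_i=\tau_i(C_{i-1})$, each $\tau_i$ is a u-switch over $C_{i-1}$ and $C_k=C'$.
   Context: Graphs are finite, simple, undirected, labeled with vertex set $[n]$; the degree sequence of $G$ is $(d_1,\dots,d_n)$ with $d_i$ the degree of vertex $i$. A unicyclic graph is a connected graph with exactly one cycle. For vertices $a,b,c,d$, $A=\binom{a\ b}{c\ d}$ is interchangeable in $G$ if $ab,cd\in E(G)$, $\{a,b\}\cap\{c,d\}=\varnothing$, $ac,bd\notin E(G)$; the 2-switch $\tau_A$ sends $G$ to $G-ab-cd+ac+bd$ if $A$ is interchangeable and to $G$ otherwise (trivial). A nontrivial 2-switch $\tau$ over a unicyclic $U$ is a u-switch if $\tau(U)$ is unicyclic. *)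

theory Defs
  imports Main
begin

definition simple_graph :: "nat \<Rightarrow> nat set set \<Rightarrow> bool" where
  "simple_graph n E \<longleftrightarrow>
     (\<forall>e\<in>E. \<exists>a b. e = {a, b} \<and> a \<noteq> b \<and> a \<in> {1..n} \<and> b \<in> {1..n})"

definition degree :: "nat set set \<Rightarrow> nat \<Rightarrow> nat" where
  "degree E v = card {u. {u, v} \<in> E}"

definition adj_rel :: "nat set set \<Rightarrow> (nat \<times> nat) set" where
  "adj_rel E = {(a, b). {a, b} \<in> E \<and> a \<noteq> b}"

definition connected_on :: "nat set \<Rightarrow> nat set set \<Rightarrow> bool" where
  "connected_on V E \<longleftrightarrow> (\<forall>u\<in>V. \<forall>v\<in>V. (u, v) \<in> (adj_rel E)\<^sup>*)"

definition is_cycle_on :: "nat set \<Rightarrow> nat set set \<Rightarrow> bool" where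
  "is_cycle_on V F \<longleftrightarrow> F \<noteq> {} \<and> finite F \<and> \<Union>F = V \<and>
     (\<forall>e\<in>F. card e = 2) \<and> (\<forall>v\<in>V. degree F v = 2) \<and> connected_on V F"

definition cycle_graph :: "nat \<Rightarrow> nat set set \<Rightarrow> bool" where
  "cycle_graph n E \<longleftrightarrow> simple_graph n E \<and> is_cycle_on {1..n} E"

definition cycle_of :: "nat set set \<Rightarrow> nat set set \<Rightarrow> bool" where
  "cycle_of E F \<longleftrightarrow> F \<subseteq> E \<and> is_cycle_on (\<Union>F) F"

definition unicyclic :: "nat \<Rightarrow> nat set set \<Rightarrow> bool" where
  "unicyclic n E \<longleftrightarrow> simple_graph n E \<and> connected_on {1..n} E \<and> (\<exists>!F. cycle_of E F)"

text \<open>2-switches, given by A = (a,b,c,d) standing for the matrix (a b; c d).\<close>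
definition interchangeable :: "nat set set \<Rightarrow> nat \<times> nat \<times> nat \<times> nat \<Rightarrow> bool" where
  "interchangeable E A = (case A of (a, b, c, d) \<Rightarrow>
     {a, b} \<in> E \<and> {c, d} \<in> E \<and> {a, b} \<inter> {c, d} = {} \<and> {a, c} \<notin> E \<and> {b, d} \<notin> E)"

definition two_switch :: "nat \<times> nat \<times> nat \<times> nat \<Rightarrow> nat set set \<Rightarrow> nat set set" where
  "two_switch A E = (case A of (a, b, c, d) \<Rightarrow>
     (if interchangeable E A then (E - {{a, b}, {c, d}}) \<union> {{a, c}, {b, d}} else E))"

definition u_switch :: "nat \<Rightarrow> nat set set \<Rightarrow> nat \<times> nat \<times> nat \<times> nat \<Rightarrow> bool" where
  "u_switch n U A \<longleftrightarrow> interchangeable U A \<and> unicyclic n (two_switch A U)"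

fun u_switch_seq :: "nat \<Rightarrow> nat set set \<Rightarrow> (nat \<times> nat \<times> nat \<times> nat) list \<Rightarrow> nat set set \<Rightarrow> bool" where
  "u_switch_seq n G [] G' \<longleftrightarrow> G = G'"
| "u_switch_seq n G (t # ts) G' \<longleftrightarrow> u_switch n G t \<and> u_switch_seq n (two_switch t G) ts G'"

end

theory Submission
  imports Defs
begin

fun pe :: "'a list \<Rightarrow> 'a set set" where
  "pe (x # y # zs) = insert {x, y} (pe (y # zs))"
| "pe _ = {}"

definition cyc :: "'a list \<Rightarrow> 'a set set" where
  "cyc vs = pe (vs @ [hd vs])"

lemma pe_append:
  "xs \<noteq> [] \<Longrightarrow> ys \<noteq> [] \<Longrightarrow> pe (xs @ ys) = pe xs \<union> pe ys \<union> {{last xs, hd ys}}"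
proof (induction xs)
  case Nil then show ?case by simp
next
  case (Cons x xs)
  show ?case
  proof (cases xs)
    case Nil
    then show ?thesis using Cons by (cases ys) auto
  next
    case (Cons z zs)
    then show ?thesis using Cons.IH Cons.prems by auto
  qed
qed

lemma pe_rev: "pe (rev xs) = pe xs"
proof (induction xs)
  case Nil then show ?case by simp
next
  case (Cons x xs)
  show ?case
  proof (cases xs)
    case Nil then show ?thesis by simp
  next
    case (Cons z zs)
    have "pe (rev (x # xs)) = pe (rev xs @ [x])" by simp
    also have "\<dots> = pe (rev xs) \<union> {{last (rev xs), x}}"
      using pe_append[of "rev xs" "[x]"] Cons by simp
    also have "\<dots> = pe (x # xs)" using Cons.IH Cons by (auto simp: insert_commute)
    finally show ?thesis .
  qed
qed

lemma pe_subset: "e \<in> pe xs \<Longrightarrow> \<exists>a b. e = {a, b} \<and> a \<in> set xs \<and> b \<in> set xs"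
  by (induction xs rule: pe.induct) auto

lemma pe_nth: "e \<in> pe xs \<longleftrightarrow> (\<exists>i. Suc i < length xs \<and> e = {xs ! i, xs ! Suc i})"
proof (induction xs rule: pe.induct)
  case (1 x y zs)
  show ?case
  proof
    assume "e \<in> pe (x # y # zs)"
    then consider "e = {x, y}" | "e \<in> pe (y # zs)" by auto
    then show "\<exists>i. Suc i < length (x # y # zs) \<and> e = {(x # y # zs) ! i, (x # y # zs) ! Suc i}"
    proof cases
      case 1 then show ?thesis by (intro exI[of _ 0]) auto
    next
      case 2
      then obtain i where "Suc i < length (y # zs)" "e = {(y # zs) ! i, (y # zs) ! Suc i}"
        using "1.IH" by blast
      then show ?thesis by (intro exI[of _ "Suc i"]) auto
    qed
  next
    assume "\<exists>i. Suc i < length (x # y # zs) \<and> e = {(x # y # zs) ! i, (x # y # zs) ! Suc i}"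
    then obtain i where i: "Suc i < length (x # y # zs)" "e = {(x # y # zs) ! i, (x # y # zs) ! Suc i}"
      by blast
    show "e \<in> pe (x # y # zs)"
    proof (cases i)
      case 0 then show ?thesis using i by simp
    next
      case (Suc i')
      then have "e \<in> pe (y # zs)" using "1.IH" i by auto
      then show ?thesis by simp
    qed
  qed
qed auto

lemma cyc_alt: "vs \<noteq> [] \<Longrightarrow> cyc vs = pe vs \<union> {{last vs, hd vs}}"
  unfolding cyc_def using pe_append[of vs "[hd vs]"] by simp

lemma cyc_eq: assumes "vs \<noteq> []"
  shows "cyc vs = (\<lambda>i. {vs ! i, vs ! (Suc i mod length vs)}) ` {..<length vs}"
proof -
  let ?L = "length vs"
  have "e \<in> cyc vs \<longleftrightarrow> (\<exists>i<?L. e = {vs ! i, vs ! (Suc i mod ?L)})" for e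
  proof
    assume "e \<in> cyc vs"
    then obtain i where i: "Suc i < length (vs @ [hd vs])" "e = {(vs @ [hd vs]) ! i, (vs @ [hd vs]) ! Suc i}"
      unfolding cyc_def pe_nth by blast
    show "\<exists>i<?L. e = {vs ! i, vs ! (Suc i mod ?L)}"
    proof (cases "Suc i < ?L")
      case True then show ?thesis using i by (intro exI[of _ i]) (auto simp: nth_append)
    next
      case False
      then have "Suc i = ?L" using i by simp
      then show ?thesis using i assms by (intro exI[of _ i]) (auto simp: nth_append hd_conv_nth)
    qed
  next
    assume "\<exists>i<?L. e = {vs ! i, vs ! (Suc i mod ?L)}"
    then obtain i where i: "i < ?L" "e = {vs ! i, vs ! (Suc i mod ?L)}" by blast
    have "e = {(vs @ [hd vs]) ! i, (vs @ [hd vs]) ! Suc i}"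
    proof (cases "Suc i < ?L")
      case True then show ?thesis using i by (auto simp: nth_append)
    next
      case False
      then have "Suc i = ?L" using i by simp
      then show ?thesis using i assms by (auto simp: nth_append hd_conv_nth)
    qed
    then show "e \<in> cyc vs" unfolding cyc_def pe_nth using i by (intro exI[of _ i]) simp
  qed
  then show ?thesis by auto
qed

lemma cyc_rotate1: "cyc (rotate1 xs) = cyc xs"
proof (cases xs)
  case Nil then show ?thesis by simp
next
  case (Cons x ys)
  show ?thesis
  proof (cases ys)
    case Nil then show ?thesis using Cons by simp
  next
    case (Cons y zs)
    have "cyc (rotate1 xs) = pe (ys @ [x]) \<union> {{x, y}}"
      using cyc_alt[of "ys @ [x]"] \<open>xs = x # ys\<close> Cons by simp
    moreover have "cyc xs = pe (x # ys @ [x])" using \<open>xs = x # ys\<close> by (simp add: cyc_def)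
    moreover have "pe (x # ys @ [x]) = insert {x, y} (pe (ys @ [x]))" using Cons by simp
    ultimately show ?thesis by auto
  qed
qed

lemma cyc_rotate: "cyc (rotate m xs) = cyc xs"
  by (induction m) (auto simp: cyc_rotate1)

lemma cyc_revtl: "xs \<noteq> [] \<Longrightarrow> cyc (hd xs # rev (tl xs)) = cyc xs"
proof -
  assume "xs \<noteq> []"
  then obtain x ys where xs: "xs = x # ys" by (cases xs) auto
  have "(x # rev ys) @ [x] = rev (x # ys @ [x])" by simp
  then have "pe ((x # rev ys) @ [x]) = pe (x # ys @ [x])" by (metis pe_rev)
  then show ?thesis using xs by (simp add: cyc_def)
qed

lemma cyc_mem: "vs \<noteq> [] \<Longrightarrow> e \<in> cyc vs \<longleftrightarrow> (\<exists>i<length vs. e = {vs ! i, vs ! (Suc i mod length vs)})"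
  using cyc_eq by auto

lemma cyc_nbrs:
  assumes d: "distinct vs" and L: "length vs \<ge> 3" and i: "i < length vs"
  shows "{u. {u, vs ! i} \<in> cyc vs} = {vs ! (Suc i mod length vs), vs ! ((i + length vs - 1) mod length vs)}"
    and "vs ! (Suc i mod length vs) \<noteq> vs ! ((i + length vs - 1) mod length vs)"
proof -
  let ?L = "length vs"
  have ne: "vs \<noteq> []" using L by auto
  have pk: "Suc ((i + ?L - 1) mod ?L) mod ?L = i"
  proof (cases i)
    case 0
    have "Suc (?L - 1) = ?L" using L by simp
    then show ?thesis using 0 by simp
  next
    case (Suc i') 
    then have "i + ?L - 1 = i' + ?L" by simp
    then have "(i + ?L - 1) mod ?L = i' mod ?L" by simp
    also have "\<dots> = i'" using Suc i by simp
    finally have "(i + ?L - 1) mod ?L = i'" .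
    then show ?thesis using Suc i by simp
  qed
  show "{u. {u, vs ! i} \<in> cyc vs} = {vs ! (Suc i mod ?L), vs ! ((i + ?L - 1) mod ?L)}"
  proof (intro equalityI subsetI)
    fix u assume "u \<in> {u. {u, vs ! i} \<in> cyc vs}"
    then obtain k where k: "k < ?L" "{u, vs ! i} = {vs ! k, vs ! (Suc k mod ?L)}"
      using cyc_mem[OF ne] by auto
    have kk: "Suc k mod ?L < ?L" using ne by simp
    from k(2) consider "vs ! i = vs ! k \<and> u = vs ! (Suc k mod ?L)" | "vs ! i = vs ! (Suc k mod ?L) \<and> u = vs ! k"
      unfolding doubleton_eq_iff by blast
    then show "u \<in> {vs ! (Suc i mod ?L), vs ! ((i + ?L - 1) mod ?L)}"
    proof cases
      case 1
      then have "i = k" using d i k(1) by (simp add: nth_eq_iff_index_eq)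
      then show ?thesis using 1 by simp
    next
      case 2
      then have ik: "i = Suc k mod ?L" using d i kk by (simp add: nth_eq_iff_index_eq)
      have "k = (i + ?L - 1) mod ?L"
      proof (cases "Suc k < ?L")
        case True then have "i = Suc k" using ik by simp
        then show ?thesis using True by simp
      next
        case False then have "Suc k = ?L" using k by simp
        then have "i = 0" using ik by simp
        then show ?thesis using \<open>Suc k = ?L\<close> by simp
      qed
      then show ?thesis using 2 by simp
    qed
  next
    fix u assume "u \<in> {vs ! (Suc i mod ?L), vs ! ((i + ?L - 1) mod ?L)}"
    then consider "u = vs ! (Suc i mod ?L)" | "u = vs ! ((i + ?L - 1) mod ?L)" by auto
    then show "u \<in> {u. {u, vs ! i} \<in> cyc vs}"
    proof cases
      case 1 then show ?thesis using cyc_mem[OF ne] i by (auto simp: insert_commute)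
    next
      case 2
      have "(i + ?L - 1) mod ?L < ?L" using ne by simp
      then show ?thesis using 2 cyc_mem[OF ne] pk by fastforce
    qed
  qed
  have "Suc i mod ?L \<noteq> (i + ?L - 1) mod ?L"
  proof
    assume h: "Suc i mod ?L = (i + ?L - 1) mod ?L"
    then have "Suc (Suc i mod ?L) mod ?L = i" using pk by simp
    then have "Suc (Suc i) mod ?L = i" by (simp add: mod_Suc_eq)
    moreover have "Suc (Suc i) mod ?L \<noteq> i"
    proof (cases "Suc (Suc i) < ?L")
      case True then show ?thesis by simp
    next
      case False
      then have "Suc (Suc i) = ?L \<or> Suc i = ?L" using i by linarith
      then show ?thesis
      proof
        assume a: "Suc (Suc i) = ?L"
        then have "Suc (Suc i) mod ?L = 0" by simp
        then show ?thesis using a L by simp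
      next
        assume a: "Suc i = ?L"
        have "(?L + 1) mod ?L = 1" using L by (simp only: mod_add_self1) simp
        then have "Suc (Suc i) mod ?L = 1" using a by simp
        then show ?thesis using a L by simp
      qed
    qed
    ultimately show False by simp
  qed
  then show "vs ! (Suc i mod ?L) \<noteq> vs ! ((i + ?L - 1) mod ?L)"
    using d ne by (simp add: nth_eq_iff_index_eq)
qed

lemma cycle_graph_cyc:
  assumes d: "distinct vs" and s: "set vs = {1..n}" and L: "length vs \<ge> 3"
  shows "cycle_graph n (cyc vs)"
proof -
  let ?L = "length vs"
  have ne: "vs \<noteq> []" using L by auto
  have edge: "\<exists>a b. e = {a, b} \<and> a \<noteq> b \<and> a \<in> set vs \<and> b \<in> set vs" if "e \<in> cyc vs" for e
  proof -
    have "\<exists>i<?L. e = {vs ! i, vs ! (Suc i mod ?L)}" using cyc_mem[OF ne, of e] that by simp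
    then obtain i where i: "i < ?L" "e = {vs ! i, vs ! (Suc i mod ?L)}" by blast
    have "i \<noteq> Suc i mod ?L"
    proof (cases "Suc i < ?L")
      case True then show ?thesis by simp
    next
      case False then have "Suc i = ?L" using i by simp
      then show ?thesis using L by simp
    qed
    then have "vs ! i \<noteq> vs ! (Suc i mod ?L)" using d i ne by (simp add: nth_eq_iff_index_eq)
    then show ?thesis using i ne by (intro exI[of _ "vs ! i"] exI[of _ "vs ! (Suc i mod ?L)"]) auto
  qed
  have sg: "simple_graph n (cyc vs)" unfolding simple_graph_def
  proof
    fix e assume "e \<in> cyc vs"
    then obtain a b where "e = {a, b}" "a \<noteq> b" "a \<in> set vs" "b \<in> set vs" using edge by blast
    then show "\<exists>a b. e = {a, b} \<and> a \<noteq> b \<and> a \<in> {1..n} \<and> b \<in> {1..n}" using s by auto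
  qed
  have c2: "\<forall>e\<in>cyc vs. card e = 2"
  proof
    fix e assume "e \<in> cyc vs"
    then obtain a b where "e = {a, b}" "a \<noteq> b" using edge by blast
    then show "card e = 2" by simp
  qed
  have fin: "finite (cyc vs)" using cyc_eq[OF ne] by simp
  have "0 < ?L" using ne by simp
  then have "{vs ! 0, vs ! (Suc 0 mod ?L)} \<in> cyc vs" unfolding cyc_eq[OF ne] by blast
  then have nonempty: "cyc vs \<noteq> {}" by blast
  have un: "\<Union>(cyc vs) = {1..n}"
  proof
    show "\<Union>(cyc vs) \<subseteq> {1..n}"
    proof
      fix x assume "x \<in> \<Union>(cyc vs)"
      then obtain e where "e \<in> cyc vs" "x \<in> e" by blast
      then obtain a b where "e = {a, b}" "a \<in> set vs" "b \<in> set vs" using edge by blast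
      then show "x \<in> {1..n}" using s \<open>x \<in> e\<close> by auto
    qed
    show "{1..n} \<subseteq> \<Union>(cyc vs)"
    proof
      fix x assume "x \<in> {1..n}"
      then obtain i where "i < ?L" "x = vs ! i" using s by (metis in_set_conv_nth)
      then have "{vs ! i, vs ! (Suc i mod ?L)} \<in> cyc vs" using cyc_mem[OF ne] by blast
      then show "x \<in> \<Union>(cyc vs)" using \<open>x = vs ! i\<close> by blast
    qed
  qed
  have deg: "\<forall>v\<in>{1..n}. degree (cyc vs) v = 2"
  proof
    fix v assume "v \<in> {1..n}"
    then obtain i where i: "i < ?L" "v = vs ! i" using s by (metis in_set_conv_nth)
    show "degree (cyc vs) v = 2" unfolding degree_def i(2) cyc_nbrs[OF d L i(1)]
      using cyc_nbrs(2)[OF d L i(1)] by simp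
  qed
  have step: "(vs ! i, vs ! Suc i) \<in> adj_rel (cyc vs)" if "Suc i < ?L" for i
  proof -
    have "i < ?L" "Suc i mod ?L = Suc i" using that by auto
    then have "{vs ! i, vs ! Suc i} \<in> cyc vs" using cyc_mem[OF ne, of "{vs ! i, vs ! Suc i}"] by metis
    moreover have "vs ! i \<noteq> vs ! Suc i" using d that by (simp add: nth_eq_iff_index_eq)
    ultimately show ?thesis by (simp add: adj_rel_def)
  qed
  have reach: "i < ?L \<Longrightarrow> (vs ! 0, vs ! i) \<in> (adj_rel (cyc vs))\<^sup>*" for i
  proof (induction i)
    case 0 then show ?case by simp
  next
    case (Suc i)
    then have "(vs ! 0, vs ! i) \<in> (adj_rel (cyc vs))\<^sup>*" by simp
    then show ?case using step[of i] Suc.prems by (simp add: rtrancl.rtrancl_into_rtrancl)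
  qed
  have sym: "sym (adj_rel (cyc vs))" unfolding sym_def adj_rel_def by (auto simp: insert_commute)
  have symr: "sym ((adj_rel (cyc vs))\<^sup>*)" using sym sym_rtrancl by blast
  have conn: "connected_on {1..n} (cyc vs)"
    unfolding connected_on_def
  proof (intro ballI)
    fix u v assume "u \<in> {1..n}" "v \<in> {1..n}"
    then obtain i j where "i < ?L" "u = vs ! i" "j < ?L" "v = vs ! j" using s by (metis in_set_conv_nth)
    then have "(vs ! 0, u) \<in> (adj_rel (cyc vs))\<^sup>*" "(vs ! 0, v) \<in> (adj_rel (cyc vs))\<^sup>*"
      using reach by auto
    then have "(u, vs ! 0) \<in> (adj_rel (cyc vs))\<^sup>*" "(vs ! 0, v) \<in> (adj_rel (cyc vs))\<^sup>*"
      using symr by (auto intro: symD)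
    then show "(u, v) \<in> (adj_rel (cyc vs))\<^sup>*" by auto
  qed
  show ?thesis unfolding cycle_graph_def is_cycle_on_def
    using sg c2 fin nonempty un deg conn by simp
qed

lemma card2_eq: "card S = 2 \<Longrightarrow> a \<in> S \<Longrightarrow> b \<in> S \<Longrightarrow> a \<noteq> b \<Longrightarrow> S = {a, b}"
proof -
  assume h: "card S = 2" "a \<in> S" "b \<in> S" "a \<noteq> b"
  then obtain x y where "S = {x, y}" "x \<noteq> y" by (meson card_2_iff)
  then show "S = {a, b}" using h by auto
qed

lemma card2_three: "card S = 2 \<Longrightarrow> a \<in> S \<Longrightarrow> b \<in> S \<Longrightarrow> c \<in> S \<Longrightarrow> a \<noteq> b \<Longrightarrow> a \<noteq> c \<Longrightarrow> b \<noteq> c \<Longrightarrow> False"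
proof -
  assume h: "card S = 2" "a \<in> S" "b \<in> S" "c \<in> S" "a \<noteq> b" "a \<noteq> c" "b \<noteq> c"
  then have "S = {a, b}" using card2_eq[of S a b] by simp
  then show False using h by simp
qed


lemma edge_nonloop: "card e = 2 \<Longrightarrow> e = {u, v} \<Longrightarrow> u \<noteq> v"
  by auto

lemma cycle_graph_unicyclic:
  assumes cg: "cycle_graph n C"
  shows "unicyclic n C"
proof -
  have sg: "simple_graph n C" and fin: "finite C" and un: "\<Union>C = {1..n}"
    and c2: "\<forall>e\<in>C. card e = 2" and deg: "\<forall>v\<in>{1..n}. degree C v = 2"
    and conn: "connected_on {1..n} C" and ne: "C \<noteq> {}"
    using cg unfolding cycle_graph_def is_cycle_on_def by auto
  have self: "cycle_of C C" unfolding cycle_of_def using cg un unfolding cycle_graph_def by simp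
  have uniq: "F = C" if F: "cycle_of C F" for F
  proof -
    let ?V = "\<Union>F"
    have FC: "F \<subseteq> C" and Fne: "F \<noteq> {}" and degF: "\<forall>v\<in>?V. degree F v = 2"
      and c2F: "\<forall>e\<in>F. card e = 2"
      using F unfolding cycle_of_def is_cycle_on_def by auto
    have Vsub: "?V \<subseteq> {1..n}" using FC un by auto
    have NF: "{u. {u, v} \<in> F} = {u. {u, v} \<in> C}" if v: "v \<in> ?V" for v
    proof -
      have "card {u. {u, v} \<in> C} = 2" using deg Vsub v unfolding degree_def by auto
      then have "finite {u. {u, v} \<in> C}" by (intro card_ge_0_finite) simp
      moreover have "{u. {u, v} \<in> F} \<subseteq> {u. {u, v} \<in> C}" using FC by auto
      moreover have "card {u. {u, v} \<in> F} = card {u. {u, v} \<in> C}"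
        using degF v deg Vsub unfolding degree_def by auto
      ultimately show ?thesis using card_subset_eq by blast
    qed
    have clos: "b \<in> ?V" if "a \<in> ?V" "(a, b) \<in> adj_rel C" for a b
    proof -
      have "{b, a} \<in> C" using that(2) unfolding adj_rel_def by (auto simp: insert_commute)
      then have "{b, a} \<in> F" using NF[OF that(1)] by blast
      then show ?thesis by blast
    qed
    obtain e0 where "e0 \<in> F" using Fne by blast
    then obtain x y where "e0 = {x, y}" using c2F by (meson card_2_iff)
    then have x: "x \<in> ?V" using \<open>e0 \<in> F\<close> by blast
    have reachV: "(x, v) \<in> (adj_rel C)\<^sup>* \<Longrightarrow> v \<in> ?V" for v
    proof (induction rule: rtrancl_induct)
      case base then show ?case using x .
    next
      case (step b c) then show ?case using clos by blast
    qed
    have V: "?V = {1..n}"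
    proof
      show "?V \<subseteq> {1..n}" using Vsub .
      show "{1..n} \<subseteq> ?V"
      proof
        fix v assume "v \<in> {1..n}"
        then have "(x, v) \<in> (adj_rel C)\<^sup>*" using conn x Vsub unfolding connected_on_def by blast
        then show "v \<in> ?V" using reachV by blast
      qed
    qed
    show "F = C"
    proof
      show "F \<subseteq> C" using FC .
      show "C \<subseteq> F"
      proof
        fix e assume e: "e \<in> C"
        then obtain a b where ab: "e = {a, b}" using c2 by (meson card_2_iff)
        then have "a \<in> ?V" using e un V by blast
        moreover have "{b, a} \<in> C" using e ab by (simp add: insert_commute)
        ultimately have "{b, a} \<in> F" using NF by blast
        then show "e \<in> F" using ab by (simp add: insert_commute)
      qed
    qed
  qed
  show ?thesis unfolding unicyclic_def using sg conn self uniq by blast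
qed

lemma distinct_len_le:
  assumes "distinct vs" "set vs \<subseteq> {1..(n::nat)}"
  shows "length vs \<le> n"
proof -
  have "length vs = card (set vs)" using assms(1) by (simp add: distinct_card)
  also have "\<dots> \<le> card {1..n}" using assms(2) by (intro card_mono) auto
  finally show ?thesis by simp
qed

lemma pe_mem: "{x, y} \<in> pe xs \<Longrightarrow> x \<in> set xs \<and> y \<in> set xs"
proof -
  assume "{x, y} \<in> pe xs"
  then obtain a b where "{x, y} = {a, b}" "a \<in> set xs" "b \<in> set xs" using pe_subset by blast
  then show ?thesis unfolding doubleton_eq_iff by auto
qed

lemma cycle_graph_repr:
  assumes cg: "cycle_graph n C"
  shows "\<exists>vs. distinct vs \<and> set vs = {1..n} \<and> length vs \<ge> 3 \<and> C = cyc vs"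
proof -
  have sg: "simple_graph n C" and un: "\<Union>C = {1..n}"
    and c2: "\<forall>e\<in>C. card e = 2" and deg: "\<forall>v\<in>{1..n}. degree C v = 2"
    and conn: "connected_on {1..n} C" and ne: "C \<noteq> {}"
    using cg unfolding cycle_graph_def is_cycle_on_def by auto
  define N where "N v = {u. {u, v} \<in> C}" for v
  have cardN: "card (N v) = 2" if "v \<in> {1..n}" for v
    using deg that unfolding N_def degree_def by auto
  have finN: "finite (N v)" if "v \<in> {1..n}" for v
    using cardN[OF that] by (intro card_ge_0_finite) simp
  have inV: "u \<in> {1..n}" "v \<in> {1..n}" if "{u, v} \<in> C" for u v
    using that un by blast+
  have nl: "u \<noteq> v" if "{u, v} \<in> C" for u v
    using that c2 by fastforce
  define P where "P vs \<longleftrightarrow> distinct vs \<and> set vs \<subseteq> {1..n} \<and> pe vs \<subseteq> C \<and> length vs \<ge> 2" for vs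
  obtain e0 where "e0 \<in> C" using ne by blast
  then obtain a0 b0 where ab0: "e0 = {a0, b0}" "a0 \<noteq> b0" using c2 by (meson card_2_iff)
  have "P [a0, b0]" unfolding P_def using ab0 \<open>e0 \<in> C\<close> inV[of a0 b0] by auto
  moreover have "\<forall>vs. P vs \<longrightarrow> length vs \<le> n" unfolding P_def using distinct_len_le by blast
  ultimately have bnd: "\<forall>ws. P ws \<longrightarrow> length ws < Suc n" by (simp add: less_Suc_eq_le)
  obtain vs where Pvs: "P vs" and maxv: "\<forall>ws. P ws \<longrightarrow> length ws \<le> length vs"
    using ex_has_greatest_nat[where P=P and k="[a0, b0]" and f=length and b="Suc n", OF \<open>P [a0, b0]\<close> bnd] by blast
  have d: "distinct vs" and sv: "set vs \<subseteq> {1..n}" and pC: "pe vs \<subseteq> C" and L2: "length vs \<ge> 2"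
    using Pvs unfolding P_def by auto
  define L where "L = length vs"
  have vne: "vs \<noteq> []" using L2 by auto
  define u where "u = vs ! (L - 1)"
  define pr where "pr = vs ! (L - 2)"
  have u_last: "last vs = u" unfolding u_def L_def using vne by (simp add: last_conv_nth)
  have "u \<in> set vs" using vne u_last last_in_set by metis
  then have uV: "u \<in> {1..n}" using sv by blast
  have "{pr, u} \<in> pe vs" unfolding pe_nth pr_def u_def L_def using L2
    by (intro exI[of _ "length vs - 2"]) (auto simp: Suc_diff_Suc numeral_2_eq_2)
  then have "{pr, u} \<in> C" using pC by blast
  then have prN: "pr \<in> N u" unfolding N_def by simp
  obtain w where wN: "w \<in> N u" and wpr: "w \<noteq> pr"
  proof -
    obtain x y where "N u = {x, y}" "x \<noteq> y" using cardN[OF uV] by (meson card_2_iff)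
    then show ?thesis using that prN by blast
  qed
  have wuC: "{w, u} \<in> C" using wN unfolding N_def by simp
  have w_in: "w \<in> set vs"
  proof (rule ccontr)
    assume nw: "w \<notin> set vs"
    have "P (vs @ [w])" unfolding P_def
    proof (intro conjI)
      show "distinct (vs @ [w])" using d nw by simp
      show "set (vs @ [w]) \<subseteq> {1..n}" using sv inV(1)[OF wuC] by simp
      have "pe (vs @ [w]) = pe vs \<union> pe [w] \<union> {{last vs, hd [w]}}" using pe_append[OF vne] by simp
      moreover have "{last vs, hd [w]} \<in> C" using wuC u_last by (simp add: insert_commute)
      ultimately show "pe (vs @ [w]) \<subseteq> C" using pC by simp
      show "length (vs @ [w]) \<ge> 2" using L2 by simp
    qed
    then show False using maxv by fastforce
  qed
  then obtain i where i: "i < L" "w = vs ! i" unfolding L_def by (metis in_set_conv_nth)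
  have "w \<noteq> u" using nl[OF wuC] .
  then have iL1: "i \<noteq> L - 1" using i u_def by auto
  have iL2: "i \<noteq> L - 2" using i wpr pr_def by auto
  have i0: "i = 0"
  proof (rule ccontr)
    assume "i \<noteq> 0"
    have wV: "w \<in> {1..n}" using inV(1)[OF wuC] .
    have e1: "{vs ! (i - 1), w} \<in> C"
    proof -
      have "{vs ! (i - 1), vs ! Suc (i - 1)} \<in> pe vs" unfolding pe_nth using \<open>i \<noteq> 0\<close> i L_def
        by (intro exI[of _ "i - 1"]) auto
      then show ?thesis using pC i \<open>i \<noteq> 0\<close> by auto
    qed
    have e2: "{vs ! (i + 1), w} \<in> C"
    proof -
      have "{vs ! i, vs ! Suc i} \<in> pe vs" unfolding pe_nth using i iL1 L_def
        by (intro exI[of _ i]) auto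
      then show ?thesis using pC i by (auto simp: insert_commute)
    qed
    have e3: "{u, w} \<in> C" using wuC by (simp add: insert_commute)
    have "vs ! (i - 1) \<noteq> vs ! (i + 1)" using d i iL1 L_def \<open>i \<noteq> 0\<close> by (simp add: nth_eq_iff_index_eq)
    moreover have "vs ! (i - 1) \<noteq> u" using d i iL1 L_def \<open>i \<noteq> 0\<close> u_def by (simp add: nth_eq_iff_index_eq)
    moreover have "vs ! (i + 1) \<noteq> u" using d i iL1 iL2 L_def u_def by (simp add: nth_eq_iff_index_eq)
    ultimately show False
      using card2_three[OF cardN[OF wV], of "vs ! (i - 1)" "vs ! (i + 1)" u] e1 e2 e3
      unfolding N_def by simp
  qed
  have L3: "L \<ge> 3" using iL2 i0 L2 L_def by auto
  have huC: "{last vs, hd vs} \<in> C" using wuC i0 i u_last vne by (simp add: hd_conv_nth insert_commute)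
  have cycC: "cyc vs \<subseteq> C" using cyc_alt[OF vne] pC huC by simp
  have Neq: "N x = {y. {y, x} \<in> cyc vs}" if "x \<in> set vs" for x
  proof -
    from that obtain k where k: "k < length vs" "x = vs ! k" by (metis in_set_conv_nth)
    have xV: "x \<in> {1..n}" using that sv by blast
    have L3': "length vs \<ge> 3" using L3 L_def by simp
    have "{y. {y, x} \<in> cyc vs} = {vs ! (Suc k mod length vs), vs ! ((k + length vs - 1) mod length vs)}"
      using cyc_nbrs(1)[OF d L3' k(1)] k(2) by simp
    then have "card {y. {y, x} \<in> cyc vs} = 2" using cyc_nbrs(2)[OF d L3' k(1)] by simp
    moreover have "{y. {y, x} \<in> cyc vs} \<subseteq> N x" unfolding N_def using cycC by blast
    ultimately show ?thesis using cardN[OF xV] finN[OF xV] card_subset_eq by metis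
  qed
  have clos: "b \<in> set vs" if "a \<in> set vs" "(a, b) \<in> adj_rel C" for a b
  proof -
    have "{b, a} \<in> C" using that(2) unfolding adj_rel_def by (auto simp: insert_commute)
    then have "{b, a} \<in> cyc vs" using Neq[OF that(1)] unfolding N_def by blast
    then have "b \<in> set (vs @ [hd vs])" unfolding cyc_def by (meson pe_mem)
    then show ?thesis using vne by auto
  qed
  have hV: "hd vs \<in> set vs" using vne by simp
  have reach: "(hd vs, v) \<in> (adj_rel C)\<^sup>* \<Longrightarrow> v \<in> set vs" for v
  proof (induction rule: rtrancl_induct)
    case base then show ?case using hV .
  next
    case (step b c) then show ?case using clos by blast
  qed
  have sV: "set vs = {1..n}"
  proof
    show "set vs \<subseteq> {1..n}" using sv .
    show "{1..n} \<subseteq> set vs"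
    proof
      fix v assume "v \<in> {1..n}"
      then have "(hd vs, v) \<in> (adj_rel C)\<^sup>*" using conn hV sv unfolding connected_on_def by blast
      then show "v \<in> set vs" using reach by blast
    qed
  qed
  have "C \<subseteq> cyc vs"
  proof
    fix e assume e: "e \<in> C"
    then obtain a b where ab: "e = {a, b}" using c2 by (meson card_2_iff)
    then have "a \<in> set vs" using e inV sV by blast
    moreover have "b \<in> N a" using e ab unfolding N_def by (simp add: insert_commute)
    ultimately have "{b, a} \<in> cyc vs" using Neq by blast
    then show "e \<in> cyc vs" using ab by (simp add: insert_commute)
  qed
  then have "C = cyc vs" using cycC by blast
  then show ?thesis using d sV L3 L_def by blast
qed

lemma switch_lemma:
  assumes dist: "distinct (p @ q @ r)" and pne: "p \<noteq> []" and q2: "length q \<ge> 2"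
    and nd: "\<not> (r = [] \<and> length p = 1)"
  shows "interchangeable (cyc (p @ q @ r)) (last p, hd q, last q, hd (r @ [hd p]))"
    and "two_switch (last p, hd q, last q, hd (r @ [hd p])) (cyc (p @ q @ r)) = cyc (p @ rev q @ r)"
proof -
  define a where "a = last p"
  define b where "b = hd q"
  define c where "c = last q"
  define R where "R = r @ [hd p]"
  define d where "d = hd R"
  have qne: "q \<noteq> []" using q2 by auto
  have Rne: "R \<noteq> []" unfolding R_def by simp
  have dp: "distinct p" "distinct q" "distinct r" using dist by auto
  have dj: "set p \<inter> set q = {}" "set p \<inter> set r = {}" "set q \<inter> set r = {}" using dist by auto
  have aP: "a \<in> set p" unfolding a_def using pne by simp
  have bQ: "b \<in> set q" unfolding b_def using qne by simp
  have cQ: "c \<in> set q" unfolding c_def using qne by simp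
  have setR: "set R = set r \<union> {hd p}" unfolding R_def by auto
  have hdp: "hd p \<in> set p" using pne by simp
  have dR: "d \<in> set R" unfolding d_def using Rne by simp
  have bc: "b \<noteq> c"
  proof
    assume "b = c"
    obtain x y ys where "q = x # y # ys" using q2 by (cases q; cases "tl q") auto
    then show False using \<open>b = c\<close> dp(2) unfolding b_def c_def by (cases "ys = []") auto
  qed
  have ad: "a \<noteq> d"
  proof (cases r)
    case Nil
    then have "d = hd p" unfolding d_def R_def by simp
    moreover have "length p \<ge> 2" using nd Nil pne by (cases p) (auto simp: Suc_le_eq)
    then obtain x y ys where "p = x # y # ys" by (cases p; cases "tl p") auto
    ultimately show ?thesis using dp(1) unfolding a_def by auto
  next
    case (Cons z zs)
    then have "d \<in> set r" unfolding d_def R_def by simp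
    then show ?thesis using aP dj by blast
  qed
  have dnq: "d \<notin> set q" using dR setR dj hdp by blast
  have bnR: "b \<notin> set R" using bQ setR dj hdp by blast
  have cnR: "c \<notin> set R" using cQ setR dj hdp by blast
  have anq: "a \<notin> set q" using aP dj by blast
  have bnp: "b \<notin> set p" using bQ dj by blast
  have cnp: "c \<notin> set p" using cQ dj by blast
  have ac: "a \<noteq> c" using aP cnp by blast
  have ab: "a \<noteq> b" using aP bnp by blast
  have bd: "b \<noteq> d" using dnq bQ by blast
  define X where "X = pe p \<union> pe q \<union> pe R"
  have hdq: "hd (q @ R) = b" unfolding b_def using qne by simp
  have old: "cyc (p @ q @ r) = X \<union> {{a, b}, {c, d}}"
  proof -
    have "cyc (p @ q @ r) = pe (p @ (q @ R))" unfolding cyc_def R_def using pne by simp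
    also have "\<dots> = pe p \<union> pe (q @ R) \<union> {{a, b}}" using pe_append[OF pne, of "q @ R"] qne hdq
      unfolding a_def by simp
    also have "pe (q @ R) = pe q \<union> pe R \<union> {{c, d}}" using pe_append[OF qne Rne] unfolding c_def d_def by simp
    finally show ?thesis unfolding X_def by auto
  qed
  have hdq': "hd (rev q @ R) = c" unfolding c_def using qne by (simp add: hd_rev)
  have new: "cyc (p @ rev q @ r) = X \<union> {{a, c}, {b, d}}"
  proof -
    have rqne: "rev q \<noteq> []" using qne by simp
    have "cyc (p @ rev q @ r) = pe (p @ (rev q @ R))" unfolding cyc_def R_def using pne by simp
    also have "\<dots> = pe p \<union> pe (rev q @ R) \<union> {{a, c}}" using pe_append[OF pne, of "rev q @ R"] qne hdq'
      unfolding a_def by simp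
    also have "pe (rev q @ R) = pe q \<union> pe R \<union> {{b, d}}" using pe_append[OF rqne Rne] qne
      unfolding b_def d_def by (simp add: pe_rev last_rev)
    finally show ?thesis unfolding X_def by auto
  qed
  have abX: "{a, b} \<notin> X" unfolding X_def using pe_mem[of a b p] pe_mem[of a b q] pe_mem[of a b R] bnp anq bnR by blast
  have cdX: "{c, d} \<notin> X" unfolding X_def using pe_mem[of c d p] pe_mem[of c d q] pe_mem[of c d R] cnp dnq cnR by blast
  have acX: "{a, c} \<notin> X" unfolding X_def using pe_mem[of a c p] pe_mem[of a c q] pe_mem[of a c R] cnp anq cnR by blast
  have bdX: "{b, d} \<notin> X" unfolding X_def using pe_mem[of b d p] pe_mem[of b d q] pe_mem[of b d R] bnp dnq bnR by blast
  have ac1: "{a, c} \<noteq> {a, b}" using bc by (auto simp: doubleton_eq_iff)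
  have ac2: "{a, c} \<noteq> {c, d}" using ad ac by (auto simp: doubleton_eq_iff)
  have bd1: "{b, d} \<noteq> {a, b}" using ad ab by (auto simp: doubleton_eq_iff)
  have bd2: "{b, d} \<noteq> {c, d}" using bc bd by (auto simp: doubleton_eq_iff)
  have ic: "interchangeable (cyc (p @ q @ r)) (a, b, c, d)"
    unfolding interchangeable_def old using acX bdX ac1 ac2 bd1 bd2 ac ad bc bd by auto
  then show "interchangeable (cyc (p @ q @ r)) (last p, hd q, last q, hd (r @ [hd p]))"
    unfolding a_def b_def c_def d_def R_def .
  have "two_switch (a, b, c, d) (cyc (p @ q @ r)) = (X \<union> {{a, b}, {c, d}}) - {{a, b}, {c, d}} \<union> {{a, c}, {b, d}}"
    unfolding two_switch_def using ic old by simp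
  also have "\<dots> = X \<union> {{a, c}, {b, d}}" using abX cdX by auto
  finally show "two_switch (last p, hd q, last q, hd (r @ [hd p])) (cyc (p @ q @ r)) = cyc (p @ rev q @ r)"
    unfolding a_def b_def c_def d_def R_def new[unfolded a_def b_def c_def d_def R_def] .
qed

lemma len_n: "distinct vs \<Longrightarrow> set vs = {1..(n::nat)} \<Longrightarrow> length vs = n"
  by (metis card_atLeastAtMost diff_Suc_1 distinct_card)

lemma take1_rev: "xs \<noteq> [] \<Longrightarrow> take (Suc 0) (rev xs) = [last xs]"
  by (induction xs rule: rev_induct) auto

lemma main_induct:
  fixes ws :: "nat list"
  assumes dw: "distinct ws" and sw: "set ws = {1..n}" and n3: "n \<ge> 3"
    and k1: "1 \<le> k" and kn: "k \<le> n"
  shows "\<forall>vs. distinct vs \<and> set vs = {1..n} \<and> take k vs = take k ws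
           \<longrightarrow> (\<exists>ts. u_switch_seq n (cyc vs) ts (cyc ws))"
  using kn
proof (induction rule: inc_induct)
  case base
  show ?case
  proof (intro allI impI)
    fix vs assume h: "distinct vs \<and> set vs = {1..n} \<and> take n vs = take n ws"
    have "length vs = n" "length ws = n" using h dw sw len_n by auto
    then have "vs = ws" using h by simp
    then have "u_switch_seq n (cyc vs) [] (cyc ws)" by simp
    then show "\<exists>ts. u_switch_seq n (cyc vs) ts (cyc ws)" by blast
  qed
next
  case (step kk)
  have kk1: "1 \<le> kk" using k1 step.hyps by simp
  have kkn: "kk < n" using step.hyps by simp
  have lw: "length ws = n" using dw sw len_n by auto
  show ?case
  proof (intro allI impI)
    fix vs assume h: "distinct vs \<and> set vs = {1..n} \<and> take kk vs = take kk ws"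
    have dv: "distinct vs" and sv: "set vs = {1..n}" and tk: "take kk vs = take kk ws" using h by auto
    have lv: "length vs = n" using dv sv len_n by auto
    define y where "y = ws ! kk"
    have "y \<in> set vs" unfolding y_def sv using lw kkn sw nth_mem by metis
    then obtain j where j: "j < n" "vs ! j = y" using lv by (metis in_set_conv_nth)
    have jk: "kk \<le> j"
    proof (rule ccontr)
      assume "\<not> kk \<le> j"
      then have "vs ! j = ws ! j" using tk by (metis linorder_not_le nth_take)
      then have "ws ! j = ws ! kk" using j y_def by simp
      then show False using dw \<open>\<not> kk \<le> j\<close> kkn lw j by (simp add: nth_eq_iff_index_eq)
    qed
    show "\<exists>ts. u_switch_seq n (cyc vs) ts (cyc ws)"
    proof (cases "j = kk")
      case True
      have "take (Suc kk) vs = take kk vs @ [vs ! kk]" using lv kkn by (simp add: take_Suc_conv_app_nth)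
      also have "\<dots> = take kk ws @ [ws ! kk]" using tk True j y_def by simp
      also have "\<dots> = take (Suc kk) ws" using lw kkn by (simp add: take_Suc_conv_app_nth)
      finally show ?thesis using step.IH dv sv by blast
    next
      case jne: False
      show ?thesis
      proof (cases "j = n - 1 \<and> kk = 1")
        case True
        define vs' where "vs' = hd vs # rev (tl vs)"
        have vne: "vs \<noteq> []" using lv n3 by auto
        have tne: "tl vs \<noteq> []" using lv n3 by (cases vs) auto
        have eqv: "vs = hd vs # tl vs" using vne by simp
        have dv': "distinct vs'" unfolding vs'_def using dv eqv by (metis distinct.simps(2) distinct_rev set_rev)
        have sv': "set vs' = {1..n}" unfolding vs'_def using sv eqv by (metis list.simps(15) set_rev)
        have "last (tl vs) = last vs" using tne by (cases vs) auto
        also have "\<dots> = vs ! (n - 1)" using vne lv by (simp add: last_conv_nth)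
        finally have "last (tl vs) = vs ! (n - 1)" .
        then have "take (Suc 1) vs' = [vs ! 0, ws ! 1]" unfolding vs'_def using tne True j y_def vne
          by (simp add: take1_rev hd_conv_nth)
        moreover have "vs ! 0 = ws ! 0" using tk True lv lw n3 by (metis One_nat_def nth_take zero_less_one)
        moreover have "take (Suc 1) ws = [ws ! 0, ws ! 1]" using lw n3
          by (cases ws; cases "tl ws") auto
        ultimately have "take (Suc 1) vs' = take (Suc 1) ws" by simp
        then obtain ts where "u_switch_seq n (cyc vs') ts (cyc ws)" using step.IH dv' sv' True by blast
        moreover have "cyc vs' = cyc vs" unfolding vs'_def using cyc_revtl[OF vne] .
        ultimately show ?thesis by auto
      next
        case False
        have jgt: "kk < j" using jk jne by simp
        define p where "p = take kk vs"
        define q where "q = take (Suc j - kk) (drop kk vs)"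
        define r where "r = drop (Suc j) vs"
        have vs_eq: "vs = p @ q @ r"
        proof -
          have "drop kk vs = q @ drop (Suc j - kk) (drop kk vs)" unfolding q_def by (rule append_take_drop_id[symmetric])
          moreover have "drop (Suc j - kk) (drop kk vs) = r" unfolding r_def using jgt by simp
          ultimately show ?thesis unfolding p_def by (metis append_take_drop_id)
        qed
        have lp: "length p = kk" unfolding p_def using lv kkn by simp
        have lq: "length q = Suc j - kk" unfolding q_def using lv j jgt by simp
        have lr: "length r = n - Suc j" unfolding r_def using lv by simp
        have pne: "p \<noteq> []" using lp kk1 by auto
        have q2: "length q \<ge> 2" using lq jgt by simp
        have nd: "\<not> (r = [] \<and> length p = 1)" using False lr lp j by auto
        have lastq: "last q = y"
        proof -
          have "q \<noteq> []" using q2 by auto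
          then have "last q = q ! (length q - 1)" by (simp add: last_conv_nth)
          then have "last q = q ! (Suc j - kk - 1)" using lq by simp
          also have "\<dots> = drop kk vs ! (j - kk)" unfolding q_def using jgt by simp
          also have "\<dots> = vs ! j" using jgt lv j by simp
          finally show ?thesis using j by simp
        qed
        define vs' where "vs' = p @ rev q @ r"
        have dpqr: "distinct (p @ q @ r)" using dv vs_eq by simp
        have dv': "distinct vs'" unfolding vs'_def using dpqr by auto
        have sv': "set vs' = {1..n}" unfolding vs'_def using sv vs_eq by (metis set_append set_rev)
        have lv': "length vs' = n" using dv' sv' len_n by auto
        have qne: "q \<noteq> []" using q2 by auto
        have "take (Suc kk) vs' = p @ take 1 (rev q @ r)" unfolding vs'_def using lp
          by (simp add: take_append)
        also have "take 1 (rev q @ r) = [last q]" using qne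
          by (simp add: take1_rev Suc_le_eq)
        finally have "take (Suc kk) vs' = take kk ws @ [ws ! kk]" using lastq y_def tk p_def by simp
        also have "\<dots> = take (Suc kk) ws" using lw kkn by (simp add: take_Suc_conv_app_nth)
        finally have tk': "take (Suc kk) vs' = take (Suc kk) ws" .
        obtain ts where ts: "u_switch_seq n (cyc vs') ts (cyc ws)" using step.IH dv' sv' tk' by blast
        define A where "A = (last p, hd q, last q, hd (r @ [hd p]))"
        have ic: "interchangeable (cyc vs) A" unfolding A_def vs_eq using switch_lemma(1)[OF dpqr pne q2 nd] .
        have sw2: "two_switch A (cyc vs) = cyc vs'" unfolding A_def vs_eq vs'_def
          using switch_lemma(2)[OF dpqr pne q2 nd] .
        have "unicyclic n (cyc vs')"
          using cycle_graph_unicyclic[OF cycle_graph_cyc[OF dv' sv']] lv' n3 by simp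
        then have "u_switch n (cyc vs) A" unfolding u_switch_def using ic sw2 by simp
        then have "u_switch_seq n (cyc vs) (A # ts) (cyc ws)" using ts sw2 by simp
        then show ?thesis by blast
      qed
    qed
  qed
qed

theorem lemma3p6:
  fixes n :: nat and C C' :: "nat set set" and e :: "nat set"
  assumes "cycle_graph n C" and "cycle_graph n C'"
    and "\<forall>v\<in>{1..n}. degree C v = degree C' v"
    and "e \<in> C \<inter> C'"
  shows "\<exists>ts. u_switch_seq n C ts C'"
proof -
  obtain vs where vs: "distinct vs" "set vs = {1..n}" "length vs \<ge> 3" "C = cyc vs"
    using cycle_graph_repr[OF assms(1)] by blast
  obtain ws where ws: "distinct ws" "set ws = {1..n}" "length ws \<ge> 3" "C' = cyc ws"
    using cycle_graph_repr[OF assms(2)] by blast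
  have lv: "length vs = n" using vs len_n by auto
  have n3: "n \<ge> 3" using vs lv by simp
  have wne: "ws \<noteq> []" using ws by auto
  have vne: "vs \<noteq> []" using vs by auto
  have "hd ws \<in> set vs" using ws(2) vs(2) wne by (metis hd_in_set)
  then obtain m where m: "m < length vs" "vs ! m = hd ws" by (metis in_set_conv_nth)
  define vs0 where "vs0 = rotate m vs"
  have "hd vs0 = hd ws" unfolding vs0_def using m vne by (simp add: hd_rotate_conv_nth)
  moreover have "vs0 \<noteq> []" unfolding vs0_def using vne by simp
  ultimately have tk: "take 1 vs0 = take 1 ws" using wne by (cases vs0; cases ws) auto
  have d0: "distinct vs0" "set vs0 = {1..n}" unfolding vs0_def using vs by auto
  have "cyc vs0 = C" unfolding vs0_def using vs(4) cyc_rotate by simp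
  moreover have "\<exists>ts. u_switch_seq n (cyc vs0) ts (cyc ws)"
    using main_induct[OF ws(1) ws(2) n3, of 1] n3 d0 tk by auto
  ultimately show ?thesis using ws(4) by simp
qed

end
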